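(* Suppose $\psi\in\mathcal{B}$ is pseudoconcave on a neighbourhood of $+\infty$. Then there exists a concave function $\psi_{0}:(0,\infty)\to(0,\infty)$ such that $\psi/\psi_{0}$ and $\psi_{0}/\psi$ are bounded on $(\varepsilon,\infty)$ for every $\varepsilon>0$.
   Context: $\mathcal{B}$ is the set of Borel measurable $\psi:(0,\infty)\to(0,\infty)$ bounded on each compact $[a,b]\subset(0,\infty)$ and such that $1/\psi$ is bounded on each $[r,\infty)$, $r>0$. A function $\psi:(0,\infty)\to(0,\infty)$ is pseudoconcave on $(r,\infty)$ ($r\geq0$) if there is a concave $\psi_{1}:(r,\infty)\to(0,\infty)$ with $\psi/\psi_{1}$ and $\psi_{1}/\psi$ bounded on $(r,\infty)$; it is pseudoconcave on a neighbourhood of $+\infty$ if it is pseudoconcave on $(r,\infty)$ for some sufficiently large $r$. *)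

theory Defs
  imports "HOL-Analysis.Analysis"
begin

text \<open>Functions (0,inf) -> (0,inf) are represented as real => real; only values on
  {0<..} matter.\<close>

definition class_B :: "(real \<Rightarrow> real) \<Rightarrow> bool" where
  "class_B \<psi> \<longleftrightarrow>
     \<psi> \<in> borel_measurable (restrict_space borel {0<..}) \<and>
     (\<forall>x>0. \<psi> x > 0) \<and>
     (\<forall>a b. 0 < a \<longrightarrow> a \<le> b \<longrightarrow> (\<exists>C. \<forall>x\<in>{a..b}. \<psi> x \<le> C)) \<and>
     (\<forall>r>0. \<exists>C. \<forall>x\<in>{r..}. 1 / \<psi> x \<le> C)"

definition bounded_on :: "(real \<Rightarrow> real) \<Rightarrow> real set \<Rightarrow> bool" where
  "bounded_on f S \<longleftrightarrow> (\<exists>C. \<forall>x\<in>S. \<bar>f x\<bar> \<le> C)"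

definition pseudoconcave_on :: "(real \<Rightarrow> real) \<Rightarrow> real \<Rightarrow> bool" where
  "pseudoconcave_on \<psi> r \<longleftrightarrow>
     (\<exists>\<psi>1. concave_on {r<..} \<psi>1 \<and> (\<forall>x>r. \<psi>1 x > 0) \<and>
          bounded_on (\<lambda>x. \<psi> x / \<psi>1 x) {r<..} \<and>
          bounded_on (\<lambda>x. \<psi>1 x / \<psi> x) {r<..})"

definition pseudoconcave_near_infinity :: "(real \<Rightarrow> real) \<Rightarrow> bool" where
  "pseudoconcave_near_infinity \<psi> \<longleftrightarrow> (\<exists>r\<ge>0. pseudoconcave_on \<psi> r)"

end

theory Submission
  imports Defs
begin

lemma concave_mid:
  fixes f :: "real \<Rightarrow> real"
  assumes c: "concave_on {r<..} f" and pos: "\<forall>x>r. f x > 0" and x: "x > r" and R: "R > 0"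
  shows "f x \<le> 2 * f (x + R)"
proof -
  have "f ((1 - 1/2) *\<^sub>R x + (1/2) *\<^sub>R (x + 2*R)) \<ge> (1 - 1/2) * f x + (1/2) * f (x + 2*R)"
    using concave_onD[OF c, of "1/2" x "x + 2*R"] x R by auto
  moreover have "(1 - 1/2) *\<^sub>R x + (1/2) *\<^sub>R (x + 2*R) = x + R" by (simp add: field_simps)
  moreover have "f (x + 2*R) > 0" using pos x R by auto
  ultimately show ?thesis by simp
qed

lemma concave_growth:
  fixes f :: "real \<Rightarrow> real"
  assumes c: "concave_on {r<..} f" and pos: "\<forall>x>r. f x > 0" and x: "x \<ge> r + 1" and R: "R > 0"
  shows "f (x + R) \<le> (1 + 2*R) * f x"
proof -
  define u where "u = r + 1/2"
  define t where "t = (x - u) / (x + R - u)"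
  have t0: "0 \<le> t" "t \<le> 1" "t > 0" using x R by (auto simp: t_def u_def field_simps)
  have d: "x + R - u > 0" using x R by (simp add: u_def)
  have "t * (x + R - u) = x - u" using d by (simp add: t_def)
  hence eq: "(1 - t) *\<^sub>R u + t *\<^sub>R (x + R) = x"
    by (simp add: algebra_simps)
  have "f ((1 - t) *\<^sub>R u + t *\<^sub>R (x + R)) \<ge> (1 - t) * f u + t * f (x + R)"
    using concave_onD[OF c, of t u "x + R"] t0 x R by (auto simp: u_def)
  hence h: "f x \<ge> (1 - t) * f u + t * f (x + R)" using eq by simp
  have "f u > 0" using pos by (auto simp: u_def)
  hence "(1 - t) * f u \<ge> 0" using t0 by simp
  hence "t * f (x + R) \<le> f x" using h by linarith
  hence "f (x + R) \<le> f x / t" using t0 by (simp add: field_simps)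
  also have "f x / t = f x * (1 + R / (x - u))"
    using x R by (simp add: t_def u_def field_simps)
  also have "\<dots> \<le> f x * (1 + 2*R)"
  proof -
    have xu: "x - u \<ge> 1/2" using x by (simp add: u_def)
    have "R / (x - u) \<le> R / (1/2)"
      using xu R by (intro divide_left_mono) auto
    hence "R / (x - u) \<le> 2 * R" by simp
    moreover have "f x > 0" using pos x by auto
    ultimately show ?thesis by (intro mult_left_mono) auto
  qed
  finally show ?thesis by (simp add: mult.commute)
qed

theorem proposition4:
  fixes \<psi> :: "real \<Rightarrow> real"
  assumes "class_B \<psi>"
    and "pseudoconcave_near_infinity \<psi>"
  shows "\<exists>\<psi>0. concave_on {0<..} \<psi>0 \<and> (\<forall>x>0. \<psi>0 x > 0) \<and>
           (\<forall>\<epsilon>>0. bounded_on (\<lambda>x. \<psi> x / \<psi>0 x) {\<epsilon><..} \<and>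
                   bounded_on (\<lambda>x. \<psi>0 x / \<psi> x) {\<epsilon><..})"
proof -
  obtain r f where r: "r \<ge> 0" and c: "concave_on {r<..} f" and fpos: "\<forall>x>r. f x > 0"
    and b1: "bounded_on (\<lambda>x. \<psi> x / f x) {r<..}" and b2: "bounded_on (\<lambda>x. f x / \<psi> x) {r<..}"
    using assms(2) unfolding pseudoconcave_near_infinity_def pseudoconcave_on_def by blast
  obtain C1 where C1: "\<forall>x>r. \<psi> x / f x \<le> C1" using b1 unfolding bounded_on_def
    by (meson abs_ge_self greaterThan_iff order_trans)
  obtain C2 where C2: "\<forall>x>r. f x / \<psi> x \<le> C2" using b2 unfolding bounded_on_def
    by (meson abs_ge_self greaterThan_iff order_trans)
  have ppos: "\<forall>x>0. \<psi> x > 0" and ub: "\<forall>a b. 0 < a \<longrightarrow> a \<le> b \<longrightarrow> (\<exists>C. \<forall>x\<in>{a..b}. \<psi> x \<le> C)"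
    and lb: "\<forall>r>0. \<exists>C. \<forall>x\<in>{r..}. 1 / \<psi> x \<le> C"
    using assms(1) unfolding class_B_def by auto
  define R where "R = r + 1"
  have R: "R > 0" using r by (simp add: R_def)
  have C1': "\<psi> x \<le> C1 * f x" if "x > r" for x
    using C1 that fpos by (auto simp: field_simps)
  have C2': "f x \<le> C2 * \<psi> x" if "x > r" for x
    using C2 that fpos ppos r by (auto simp: field_simps)
  have C1pos: "C1 \<ge> 0"
  proof -
    have "0 < \<psi> (r+1) / f (r+1)" using ppos fpos r by auto
    also have "\<dots> \<le> C1" using C1 by auto
    finally show ?thesis by simp
  qed
  have C2pos: "C2 \<ge> 0"
  proof -
    have "0 < f (r+1) / \<psi> (r+1)" using ppos fpos r by auto
    also have "\<dots> \<le> C2" using C2 by auto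
    finally show ?thesis by simp
  qed
  define g where "g = (\<lambda>x. f (x + R))"
  have gc: "concave_on {0<..} g"
    unfolding concave_on_iff
  proof (intro conjI ballI allI impI)
    show "convex {0::real<..}" by simp
    fix x y u v :: real assume xy: "x \<in> {0<..}" "y \<in> {0<..}" and uv: "u \<ge> 0" "v \<ge> 0" "u + v = 1"
    have "u * f (x + R) + v * f (y + R) \<le> f (u *\<^sub>R (x + R) + v *\<^sub>R (y + R))"
      using concave_on_iff[THEN iffD1, OF c] xy uv r by (auto simp: R_def)
    moreover have "u *\<^sub>R (x + R) + v *\<^sub>R (y + R) = u *\<^sub>R x + v *\<^sub>R y + R"
    proof -
      have "R * u + R * v = R" using uv by (simp flip: distrib_left)
      thus ?thesis by (simp add: algebra_simps)
    qed
    ultimately show "u * g x + v * g y \<le> g (u *\<^sub>R x + v *\<^sub>R y)" by (simp add: g_def)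
  qed
  have gpos: "\<forall>x>0. g x > 0" using fpos r by (auto simp: g_def R_def)
  show ?thesis
  proof (intro exI[of _ g] conjI gc gpos allI impI)
    fix e :: real assume e: "e > 0"
    obtain M where M: "\<forall>x\<in>{e..e + R}. \<psi> x \<le> M" using ub e R by force
    obtain M' where M': "\<forall>x\<in>{R..2*R}. \<psi> x \<le> M'" using ub R by force
    obtain C where C: "\<forall>x\<in>{e..}. 1 / \<psi> x \<le> C" using lb e by blast
    have Cpos: "C \<ge> 0"
    proof -
      have "0 < 1 / \<psi> e" using ppos e by auto
      also have "\<dots> \<le> C" using C by auto
      finally show ?thesis by simp
    qed
    have Cx: "1 \<le> C * \<psi> x" if "x \<ge> e" for x
      using C that ppos e by (auto simp: field_simps)
    show "bounded_on (\<lambda>x. \<psi> x / g x) {e<..}"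
      unfolding bounded_on_def
    proof (intro exI[of _ "max (2 * C1) (M * C * C1)"] ballI)
      fix x assume x: "x \<in> {e<..}"
      have gx: "g x > 0" using gpos x e by auto
      have px: "\<psi> x > 0" using ppos x e by auto
      have "\<psi> x \<le> max (2 * C1) (M * C * C1) * g x"
      proof (cases "x > r")
        case True
        have "\<psi> x \<le> C1 * f x" using C1' True .
        also have "\<dots> \<le> C1 * (2 * g x)"
          using concave_mid[OF c fpos True R] C1pos by (intro mult_left_mono) (auto simp: g_def)
        also have "\<dots> = 2 * C1 * g x" by simp
        also have "\<dots> \<le> max (2 * C1) (M * C * C1) * g x" using gx by (intro mult_right_mono) auto
        finally show ?thesis .
      next
        case False
        have pM: "\<psi> x \<le> M" using M x False e by (auto simp: R_def)
        have "1 \<le> C * \<psi> (x + R)" using Cx x R by auto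
        also have "\<dots> \<le> C * (C1 * g x)"
          using C1'[of "x + R"] x e r Cpos by (intro mult_left_mono) (auto simp: g_def R_def)
        finally have one: "1 \<le> C * (C1 * g x)" .
        have "\<psi> x = \<psi> x * 1" by simp
        also have "\<dots> \<le> M * (C * (C1 * g x))"
          using pM one px by (intro mult_mono) auto
        also have "\<dots> = M * C * C1 * g x" by simp
        also have "\<dots> \<le> max (2 * C1) (M * C * C1) * g x" using gx by (intro mult_right_mono) auto
        finally show ?thesis .
      qed
      thus "\<bar>\<psi> x / g x\<bar> \<le> max (2 * C1) (M * C * C1)"
        using gx px by (simp add: field_simps)
    qed
    show "bounded_on (\<lambda>x. g x / \<psi> x) {e<..}"
      unfolding bounded_on_def
    proof (intro exI[of _ "max ((1 + 2*R) * C2) (C2 * M' * C)"] ballI)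
      fix x assume x: "x \<in> {e<..}"
      have gx: "g x > 0" using gpos x e by auto
      have px: "\<psi> x > 0" using ppos x e by auto
      have "g x \<le> max ((1 + 2*R) * C2) (C2 * M' * C) * \<psi> x"
      proof (cases "x \<ge> r + 1")
        case True
        have "g x \<le> (1 + 2*R) * f x" using concave_growth[OF c fpos True R] by (simp add: g_def)
        also have "\<dots> \<le> (1 + 2*R) * (C2 * \<psi> x)"
          using C2'[of x] True R by (intro mult_left_mono) auto
        also have "\<dots> = (1 + 2*R) * C2 * \<psi> x" by simp
        also have "\<dots> \<le> max ((1 + 2*R) * C2) (C2 * M' * C) * \<psi> x" using px by (intro mult_right_mono) auto
        finally show ?thesis .
      next
        case False
        have "g x \<le> C2 * \<psi> (x + R)" using C2'[of "x + R"] x e r by (auto simp: g_def R_def)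
        also have "\<dots> \<le> C2 * M'"
          using M' x e False C2pos by (intro mult_left_mono) (auto simp: R_def)
        finally have a: "g x \<le> C2 * M'" .
        have "1 \<le> C * \<psi> x" using Cx x by auto
        hence "C2 * M' * 1 \<le> C2 * M' * (C * \<psi> x)" using a gx
          by (intro mult_left_mono) auto
        with a have "g x \<le> C2 * M' * C * \<psi> x" by (simp add: mult.assoc)
        also have "\<dots> \<le> max ((1 + 2*R) * C2) (C2 * M' * C) * \<psi> x" using px by (intro mult_right_mono) auto
        finally show ?thesis .
      qed
      thus "\<bar>g x / \<psi> x\<bar> \<le> max ((1 + 2*R) * C2) (C2 * M' * C)"
        using gx px by (simp add: field_simps)
    qed
  qed
qed

end
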